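(* Let $\mathcal{X}\subset\mathbb{R}$ be finite or countable, $\Theta\subset\mathbb{R}^m$, and for each $\theta\in\Theta$ let $P^\theta=(p^\theta_{ij})_{i,j\in\mathcal{X}}$ be the transition matrix of a time-homogeneous Markov chain $(X_n)$ on $\mathcal{X}$ which is ergodic under $\mathbb{P}^\theta$. Let $\hat F^\theta(x,x')$, $x,x'\in\mathbb{R}$, denote the distribution function of $(X_0,X_1)$ when $X_0$ has the (unique) invariant distribution $\pi^\theta$ of the chain, i.e. $\hat F^\theta(x,x')=\sum_{i\le x}\sum_{j\le x'}\pi^\theta(i)p^\theta_{ij}$. If all transition probabilities $p^\theta_{ij}$, $i,j\in\mathcal{X}$, are Borel measurable in $\theta$, then for each pair $(x,x')\in\mathbb{R}^2$ the function $\theta\mapsto\hat F^\theta(x,x')$ is Borel measurable.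
   Context: A time-homogeneous Markov chain $(X_n)$ is called ergodic if there exists a probability measure $\mu$, not depending on the initial distribution $\mu_0$, such that for every initial distribution $\mu_0$, $\lim_{t\to\infty}\|\mathbb{P}_{\mu_0}(X_t\in\cdot)-\mu\|_{TV}=0$, where $\|\mu-\nu\|_{TV}=2\sup_A(\mu(A)-\nu(A))$; $\mu$ is then the unique invariant distribution. *)

theory Defs
  imports "HOL-Probability.Probability"
begin

text \<open>A Markov chain on a countable state space X \<subseteq> real with transition kernel
  K i (a probability mass function; p_ij = pmf (K i) j).\<close>

definition law_at :: "(real \<Rightarrow> real pmf) \<Rightarrow> real pmf \<Rightarrow> nat \<Rightarrow> real pmf" where
  "law_at K mu0 t = ((\<lambda>\<nu>. bind_pmf \<nu> K) ^^ t) mu0"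

definition tv_dist :: "real pmf \<Rightarrow> real pmf \<Rightarrow> real" where
  "tv_dist mu nu = 2 * (SUP A. measure_pmf.prob mu A - measure_pmf.prob nu A)"

definition markov_kernel_on :: "real set \<Rightarrow> (real \<Rightarrow> real pmf) \<Rightarrow> bool" where
  "markov_kernel_on X K \<longleftrightarrow> (\<forall>i\<in>X. set_pmf (K i) \<subseteq> X)"

definition ergodic_chain :: "real set \<Rightarrow> (real \<Rightarrow> real pmf) \<Rightarrow> bool" where
  "ergodic_chain X K \<longleftrightarrow> (\<exists>mu::real pmf. \<forall>mu0::real pmf. set_pmf mu0 \<subseteq> X \<longrightarrow>
      ((\<lambda>t. tv_dist (law_at K mu0 t) mu) \<longlonglongrightarrow> 0))"

definition invariant_distribution :: "real set \<Rightarrow> (real \<Rightarrow> real pmf) \<Rightarrow> real pmf \<Rightarrow> bool" where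
  "invariant_distribution X K \<pi> \<longleftrightarrow> set_pmf \<pi> \<subseteq> X \<and> bind_pmf \<pi> K = \<pi>"

definition inv_dist :: "real set \<Rightarrow> (real \<Rightarrow> real pmf) \<Rightarrow> real pmf" where
  "inv_dist X K = (THE \<pi>. invariant_distribution X K \<pi>)"

definition Fhat :: "real set \<Rightarrow> (real \<Rightarrow> real pmf) \<Rightarrow> real \<Rightarrow> real \<Rightarrow> real" where
  "Fhat X K x x' = (\<Sum>\<^sub>\<infinity>i\<in>{i\<in>X. i \<le> x}.
       \<Sum>\<^sub>\<infinity>j\<in>{j\<in>X. j \<le> x'}. pmf (inv_dist X K) i * pmf (K i) j)"

end

theory Submission
  imports Defs
begin


lemma nn_meas_count:
  fixes f :: "'b \<Rightarrow> 'a \<Rightarrow> ennreal"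
  assumes A: "countable A" and f: "\<And>i. i \<in> A \<Longrightarrow> (\<lambda>\<theta>. f \<theta> i) \<in> borel_measurable M"
  shows "(\<lambda>\<theta>. \<integral>\<^sup>+ i. f \<theta> i \<partial>count_space A) \<in> borel_measurable M"
proof -
  interpret sigma_finite_measure "count_space A"
    by (rule sigma_finite_measure_count_space_countable) fact
  have "(\<lambda>(i,\<theta>). f \<theta> i) \<in> borel_measurable (count_space A \<Otimes>\<^sub>M M)"
    by (rule measurable_pair_measure_countable1[OF A]) (simp add: f)
  then have "(\<lambda>(\<theta>,i). f \<theta> i) \<in> borel_measurable (M \<Otimes>\<^sub>M count_space A)"
    by (subst measurable_pair_swap_iff) simp
  then show ?thesis by (rule borel_measurable_nn_integral[where f=f]) 
qed

lemma infsum_enn: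
  fixes f :: "'a \<Rightarrow> real"
  assumes nn: "\<And>i. i \<in> A \<Longrightarrow> f i \<ge> 0"
  shows "infsum f A = enn2real (\<integral>\<^sup>+ i. ennreal (f i) \<partial>count_space A)"
proof (cases "f summable_on A")
  case True
  have "(\<lambda>x. norm (f x)) summable_on A"
    using True by (rule summable_on_cong[THEN iffD1, rotated]) (simp add: nn)
  then have "Infinite_Set_Sum.abs_summable_on f A" using abs_summable_equivalent by blast
  then have "infsetsum f A = infsum f A" by (rule infsetsum_infsum)
  moreover have "(\<integral>\<^sup>+ i. ennreal (f i) \<partial>count_space A) = ennreal (infsetsum f A)"
    using \<open>Infinite_Set_Sum.abs_summable_on f A\<close> nn by (rule nn_integral_conv_infsetsum)
  moreover have "infsetsum f A \<ge> 0" using nn by (simp add: infsetsum_nonneg)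
  ultimately show ?thesis by simp
next
  case False
  have "(\<integral>\<^sup>+ i. ennreal (f i) \<partial>count_space A) = \<infinity>"
  proof (rule ccontr)
    assume "(\<integral>\<^sup>+ i. ennreal (f i) \<partial>count_space A) \<noteq> \<infinity>"
    then have "(\<integral>\<^sup>+ i. ennreal (norm (f i)) \<partial>count_space A) < \<infinity>"
      using nn by (subst nn_integral_cong[where v="\<lambda>i. ennreal (f i)"]) (auto simp: top.not_eq_extremum)
    then have "integrable (count_space A) f"
      by (intro integrableI_bounded) auto
    then have "Infinite_Set_Sum.abs_summable_on f A" by (simp add: abs_summable_on_def)
    then have "(\<lambda>x. norm (f x)) summable_on A" using abs_summable_equivalent by blast
    then have "f summable_on A" by (rule abs_summable_summable)
    with False show False by simp
  qed
  with False show ?thesis by (simp add: infsum_not_exists)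
qed



lemma law_at_0[simp]: "law_at K mu0 0 = mu0"
  by (simp add: law_at_def)

lemma law_at_Suc: "law_at K mu0 (Suc t) = bind_pmf (law_at K mu0 t) K"
  by (simp add: law_at_def)

lemma law_at_Suc': "law_at K mu0 (Suc t) = law_at K (bind_pmf mu0 K) t"
  by (simp add: law_at_def funpow_Suc_right del: funpow.simps)

lemma law_at_support:
  assumes "markov_kernel_on X K" "set_pmf mu0 \<subseteq> X"
  shows "set_pmf (law_at K mu0 t) \<subseteq> X"
  using assms by (induction t) (auto simp: law_at_Suc markov_kernel_on_def)

lemma tv_bound:
  "2 * (measure_pmf.prob p A - measure_pmf.prob q A) \<le> tv_dist p q"
proof -
  have "bdd_above (range (\<lambda>A. measure_pmf.prob p A - measure_pmf.prob q A))"
    proof (rule bdd_aboveI[where M=1], clarify)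
    fix B :: "real set"
    have "measure_pmf.prob p B \<le> 1" "0 \<le> measure_pmf.prob q B"
      by (simp_all add: measure_pmf.prob_le_1)
    then show "measure_pmf.prob p B - measure_pmf.prob q B \<le> 1" by linarith
  qed
  then have "measure_pmf.prob p A - measure_pmf.prob q A \<le> (SUP A. measure_pmf.prob p A - measure_pmf.prob q A)"
    by (rule cSUP_upper[OF UNIV_I])
  then show ?thesis by (simp add: tv_dist_def)
qed

lemma tv_bound_abs:
  "2 * \<bar>measure_pmf.prob p A - measure_pmf.prob q A\<bar> \<le> tv_dist p q"
proof -
  have c: "measure_pmf.prob r (UNIV - A) = 1 - measure_pmf.prob r A" for r :: "real pmf"
    using measure_pmf.prob_compl[where M=r and A=A] by simp
  show ?thesis
    using tv_bound[where p=p and q=q and A=A] tv_bound[where p=p and q=q and A="UNIV - A"] c[of p] c[of q] by (smt (verit))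
qed

lemma tv_tendsto_prob:
  assumes "(\<lambda>t. tv_dist (p t) q) \<longlonglongrightarrow> 0"
  shows "(\<lambda>t. measure_pmf.prob (p t) A) \<longlonglongrightarrow> measure_pmf.prob q A"
proof (rule tendsto_sandwich[where f="\<lambda>t. measure_pmf.prob q A - tv_dist (p t) q / 2"
      and h="\<lambda>t. measure_pmf.prob q A + tv_dist (p t) q / 2"])
  show "\<forall>\<^sub>F n in sequentially. measure_pmf.prob q A - tv_dist (p n) q / 2 \<le> measure_pmf.prob (p n) A"
  proof (intro always_eventually allI)
    fix n show "measure_pmf.prob q A - tv_dist (p n) q / 2 \<le> measure_pmf.prob (p n) A"
    proof - have "\<bar>measure_pmf.prob (p n) A - measure_pmf.prob q A\<bar> \<le> tv_dist (p n) q / 2" using tv_bound_abs[where p="p n" and q=q and A=A] by simp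
      then show ?thesis unfolding abs_le_iff by linarith qed
  qed
  show "\<forall>\<^sub>F n in sequentially. measure_pmf.prob (p n) A \<le> measure_pmf.prob q A + tv_dist (p n) q / 2"
  proof (intro always_eventually allI)
    fix n show "measure_pmf.prob (p n) A \<le> measure_pmf.prob q A + tv_dist (p n) q / 2"
    proof - have "\<bar>measure_pmf.prob (p n) A - measure_pmf.prob q A\<bar> \<le> tv_dist (p n) q / 2" using tv_bound_abs[where p="p n" and q=q and A=A] by simp
      then show ?thesis unfolding abs_le_iff by linarith qed
  qed
  show "(\<lambda>t. measure_pmf.prob q A - tv_dist (p t) q / 2) \<longlonglongrightarrow> measure_pmf.prob q A"
    using tendsto_diff[OF tendsto_const tendsto_divide[OF assms tendsto_const]] by simp
  show "(\<lambda>t. measure_pmf.prob q A + tv_dist (p t) q / 2) \<longlonglongrightarrow> measure_pmf.prob q A"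
    using tendsto_add[OF tendsto_const tendsto_divide[OF assms tendsto_const]] by simp
qed

lemma tv_tendsto_pmf:
  assumes "(\<lambda>t. tv_dist (p t) q) \<longlonglongrightarrow> 0"
  shows "(\<lambda>t. pmf (p t) i) \<longlonglongrightarrow> pmf q i"
  using tv_tendsto_prob[OF assms, of "{i}"] by (simp add: measure_pmf_single)

lemma pmf_le_imp_eq:
  fixes p q :: "'a pmf"
  assumes le: "\<And>j. pmf p j \<le> pmf q j"
  shows "p = q"
proof (rule pmf_eqI)
  fix j
  have "emeasure (measure_pmf p) (UNIV - {j}) \<le> emeasure (measure_pmf q) (UNIV - {j})"
    unfolding nn_integral_pmf[symmetric] by (intro nn_integral_mono) (simp add: le)
  then have "measure_pmf.prob p (UNIV - {j}) \<le> measure_pmf.prob q (UNIV - {j})"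
    by (simp add: measure_pmf.emeasure_eq_measure)
  then have "pmf q j \<le> pmf p j"
    using measure_pmf.prob_compl[where M=p and A="{j}"] measure_pmf.prob_compl[where M=q and A="{j}"]
    by (simp add: measure_pmf_single)
  with le[of j] show "pmf p j = pmf q j" by simp
qed



lemma ergodic_inv:
  assumes mk: "markov_kernel_on X K" and erg: "ergodic_chain X K" and mu0: "set_pmf mu0 \<subseteq> X"
  shows "(\<lambda>t. pmf (law_at K mu0 t) i) \<longlonglongrightarrow> pmf (inv_dist X K) i"
proof -
  obtain mu where mu: "\<And>nu. set_pmf nu \<subseteq> X \<Longrightarrow> (\<lambda>t. tv_dist (law_at K nu t) mu) \<longlonglongrightarrow> 0"
    using erg unfolding ergodic_chain_def by blast
  have conv: "\<And>nu j. set_pmf nu \<subseteq> X \<Longrightarrow> (\<lambda>t. pmf (law_at K nu t) j) \<longlonglongrightarrow> pmf mu j"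
    using tv_tendsto_pmf mu by blast
  have supp: "set_pmf mu \<subseteq> X"
  proof -
    have "(\<lambda>t. measure_pmf.prob (law_at K mu0 t) (-X)) \<longlonglongrightarrow> measure_pmf.prob mu (-X)"
      by (rule tv_tendsto_prob[OF mu[OF mu0]])
    moreover have "measure_pmf.prob (law_at K mu0 t) (-X) = 0" for t
      using law_at_support[OF mk mu0, of t] by (auto simp: measure_pmf_zero_iff)
    ultimately have "measure_pmf.prob mu (-X) = 0" by (simp add: LIMSEQ_const_iff)
    then show ?thesis by (auto simp: measure_pmf_zero_iff)
  qed
  have le: "pmf (bind_pmf mu K) j \<le> pmf mu j" for j
  proof -
    let ?u = "\<lambda>t i. ennreal (pmf (law_at K mu0 t) i * pmf (K i) j)"
    have "ennreal (pmf (bind_pmf mu K) j) = (\<integral>\<^sup>+ i. ennreal (pmf mu i * pmf (K i) j) \<partial>count_space UNIV)"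
      by (simp add: ennreal_pmf_bind nn_integral_measure_pmf ennreal_mult'')
    also have "\<dots> = (\<integral>\<^sup>+ i. liminf (\<lambda>t. ?u t i) \<partial>count_space UNIV)"
    proof (intro nn_integral_cong)
      fix i
      have lim: "(\<lambda>t. ?u t i) \<longlonglongrightarrow> ennreal (pmf mu i * pmf (K i) j)"
        by (intro tendsto_ennrealI tendsto_mult tendsto_const conv[OF mu0])
      have "liminf (\<lambda>t. ?u t i) = ennreal (pmf mu i * pmf (K i) j)"
        by (rule lim_imp_Liminf[OF trivial_limit_sequentially lim])
      then show "ennreal (pmf mu i * pmf (K i) j) = liminf (\<lambda>t. ?u t i)" by simp
    qed
    also have "\<dots> \<le> liminf (\<lambda>t. \<integral>\<^sup>+ i. ?u t i \<partial>count_space UNIV)"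
      by (rule nn_integral_liminf) simp
    also have "(\<lambda>t. \<integral>\<^sup>+ i. ?u t i \<partial>count_space UNIV) = (\<lambda>t. ennreal (pmf (law_at K mu0 (Suc t)) j))"
      by (simp add: law_at_Suc ennreal_pmf_bind nn_integral_measure_pmf ennreal_mult'')
    also have "liminf (\<lambda>t. ennreal (pmf (law_at K mu0 (Suc t)) j)) = ennreal (pmf mu j)"
    proof -
      have "(\<lambda>t. ennreal (pmf (law_at K mu0 (Suc t)) j)) \<longlonglongrightarrow> ennreal (pmf mu j)"
        by (intro tendsto_ennrealI LIMSEQ_Suc conv mu0)
      then show ?thesis by (rule lim_imp_Liminf[OF trivial_limit_sequentially])
    qed
    finally have "ennreal (pmf (bind_pmf mu K) j) \<le> ennreal (pmf mu j)" .
    then show ?thesis by (simp add: ennreal_le_iff)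
  qed
  have inv: "bind_pmf mu K = mu" by (rule pmf_le_imp_eq) (rule le)
  have uniq: "\<pi> = mu" if "invariant_distribution X K \<pi>" for \<pi>
  proof -
    have l: "law_at K \<pi> t = \<pi>" for t
      using that by (induction t) (auto simp: law_at_Suc invariant_distribution_def)
    have "(\<lambda>t. pmf (law_at K \<pi> t) j) \<longlonglongrightarrow> pmf mu j" for j
      using conv that unfolding invariant_distribution_def by blast
    then have "pmf \<pi> j = pmf mu j" for j using l by (simp add: LIMSEQ_const_iff)
    then show ?thesis by (rule pmf_eqI)
  qed
  have "inv_dist X K = mu"
    unfolding inv_dist_def
    proof (rule the_equality)
      show "invariant_distribution X K mu" using supp inv by (simp add: invariant_distribution_def)
    qed (rule uniq)
  then show ?thesis using conv[OF mu0] by simp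
qed



lemma infsum_meas:
  fixes f :: "'b \<Rightarrow> 'a \<Rightarrow> real"
  assumes A: "countable A" and f: "\<And>i. i \<in> A \<Longrightarrow> (\<lambda>\<theta>. f \<theta> i) \<in> borel_measurable M"
    and nn: "\<And>\<theta> i. \<theta> \<in> space M \<Longrightarrow> i \<in> A \<Longrightarrow> f \<theta> i \<ge> 0"
  shows "(\<lambda>\<theta>. infsum (f \<theta>) A) \<in> borel_measurable M"
proof -
  have "(\<lambda>\<theta>. \<integral>\<^sup>+ i. ennreal (f \<theta> i) \<partial>count_space A) \<in> borel_measurable M"
    by (rule nn_meas_count[OF A]) (rule measurable_compose[OF f measurable_ennreal])
  then have "(\<lambda>\<theta>. enn2real (\<integral>\<^sup>+ i. ennreal (f \<theta> i) \<partial>count_space A)) \<in> borel_measurable M"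
    by (rule borel_measurable_enn2real)
  then show ?thesis
    by (rule measurable_cong[THEN iffD1, rotated]) (simp add: infsum_enn nn)
qed

lemma law_meas:
  assumes X: "countable X" and mk: "\<And>\<theta>. \<theta> \<in> \<Theta> \<Longrightarrow> markov_kernel_on X (K \<theta>)" and i0: "i0 \<in> X"
    and meas: "\<And>i j. i \<in> X \<Longrightarrow> j \<in> X \<Longrightarrow> (\<lambda>\<theta>. pmf (K \<theta> i) j) \<in> borel_measurable (restrict_space borel \<Theta>)"
  shows "j \<in> X \<Longrightarrow> (\<lambda>\<theta>. pmf (law_at (K \<theta>) (return_pmf i0) t) j) \<in> borel_measurable (restrict_space borel \<Theta>)"
proof (induction t arbitrary: j)
  case 0
  then show ?case by simp
next
  case (Suc t)
  let ?M = "restrict_space borel \<Theta>"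
  let ?L = "\<lambda>\<theta>. law_at (K \<theta>) (return_pmf i0) t"
  have eq: "pmf (law_at (K \<theta>) (return_pmf i0) (Suc t)) j =
      enn2real (\<integral>\<^sup>+ i. ennreal (pmf (?L \<theta>) i * pmf (K \<theta> i) j) \<partial>count_space X)"
    if "\<theta> \<in> space ?M" for \<theta>
  proof -
    have \<theta>: "\<theta> \<in> \<Theta>" using that by (simp add: space_restrict_space)
    have sup: "set_pmf (?L \<theta>) \<subseteq> X"
      by (rule law_at_support[OF mk[OF \<theta>]]) (simp add: i0)
    have "ennreal (pmf (law_at (K \<theta>) (return_pmf i0) (Suc t)) j) =
        (\<integral>\<^sup>+ i. ennreal (pmf (?L \<theta>) i * pmf (K \<theta> i) j) \<partial>count_space UNIV)"
      by (simp add: law_at_Suc ennreal_pmf_bind nn_integral_measure_pmf ennreal_mult'')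
    also have "\<dots> = (\<integral>\<^sup>+ i. ennreal (pmf (?L \<theta>) i * pmf (K \<theta> i) j) * indicator X i \<partial>count_space UNIV)"
      by (intro nn_integral_cong) (use sup in \<open>auto simp: indicator_def set_pmf_iff\<close>)
    also have "\<dots> = (\<integral>\<^sup>+ i. ennreal (pmf (?L \<theta>) i * pmf (K \<theta> i) j) \<partial>count_space X)"
      by (simp add: nn_integral_count_space_indicator)
    finally show ?thesis by (metis enn2real_ennreal pmf_nonneg)
  qed
  have "(\<lambda>\<theta>. \<integral>\<^sup>+ i. ennreal (pmf (?L \<theta>) i * pmf (K \<theta> i) j) \<partial>count_space X) \<in> borel_measurable ?M"
  proof (rule nn_meas_count[OF X])
    fix i assume i: "i \<in> X"
    have "(\<lambda>\<theta>. pmf (?L \<theta>) i * pmf (K \<theta> i) j) \<in> borel_measurable ?M"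
      by (intro borel_measurable_times Suc.IH meas i Suc.prems)
    then show "(\<lambda>\<theta>. ennreal (pmf (?L \<theta>) i * pmf (K \<theta> i) j)) \<in> borel_measurable ?M"
      by (rule measurable_compose[OF _ measurable_ennreal])
  qed
  then have "(\<lambda>\<theta>. enn2real (\<integral>\<^sup>+ i. ennreal (pmf (?L \<theta>) i * pmf (K \<theta> i) j) \<partial>count_space X)) \<in> borel_measurable ?M"
    by (rule borel_measurable_enn2real)
  then show ?case
    by (rule measurable_cong[THEN iffD1, rotated]) (simp add: eq)
qed

theorem lemma6:
  fixes X :: "real set" and \<Theta> :: "(real ^ 'm) set"
    and K :: "real ^ 'm \<Rightarrow> real \<Rightarrow> real pmf"
  assumes "countable X"
    and "\<And>\<theta>. \<theta> \<in> \<Theta> \<Longrightarrow> markov_kernel_on X (K \<theta>)"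
    and "\<And>\<theta>. \<theta> \<in> \<Theta> \<Longrightarrow> ergodic_chain X (K \<theta>)"
    and "\<And>i j. i \<in> X \<Longrightarrow> j \<in> X \<Longrightarrow>
           (\<lambda>\<theta>. pmf (K \<theta> i) j) \<in> borel_measurable (restrict_space borel \<Theta>)"
  shows "(\<lambda>\<theta>. Fhat X (K \<theta>) x x') \<in> borel_measurable (restrict_space borel \<Theta>)"
proof (cases "X = {}")
  case True
  then show ?thesis by (simp add: Fhat_def)
next
  case False
  then obtain i0 where i0: "i0 \<in> X" by blast
  let ?M = "restrict_space borel \<Theta>"
  have P: "(\<lambda>\<theta>. pmf (inv_dist X (K \<theta>)) i) \<in> borel_measurable ?M" if i: "i \<in> X" for i
  proof (rule borel_measurable_LIMSEQ_real[where u="\<lambda>t \<theta>. pmf (law_at (K \<theta>) (return_pmf i0) t) i"])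
    fix \<theta> assume "\<theta> \<in> space ?M"
    then have \<theta>: "\<theta> \<in> \<Theta>" by (simp add: space_restrict_space)
    show "(\<lambda>t. pmf (law_at (K \<theta>) (return_pmf i0) t) i) \<longlonglongrightarrow> pmf (inv_dist X (K \<theta>)) i"
      by (rule ergodic_inv[OF assms(2)[OF \<theta>] assms(3)[OF \<theta>]]) (simp add: i0)
  next
    fix t
    show "(\<lambda>\<theta>. pmf (law_at (K \<theta>) (return_pmf i0) t) i) \<in> borel_measurable ?M"
      by (rule law_meas[OF assms(1) assms(2) i0 assms(4) i])
  qed
  have cX: "countable {i \<in> X. i \<le> a}" for a
    by (rule countable_subset[OF _ assms(1)]) auto
  have inner: "(\<lambda>\<theta>. \<Sum>\<^sub>\<infinity>j\<in>{j \<in> X. j \<le> x'}. pmf (inv_dist X (K \<theta>)) i * pmf (K \<theta> i) j)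
      \<in> borel_measurable ?M" if i: "i \<in> X" for i
  proof (rule infsum_meas[OF cX])
    fix j assume "j \<in> {j \<in> X. j \<le> x'}"
    then have j: "j \<in> X" by simp
    show "(\<lambda>\<theta>. pmf (inv_dist X (K \<theta>)) i * pmf (K \<theta> i) j) \<in> borel_measurable ?M"
      by (intro borel_measurable_times P i assms(4) j)
  qed simp
  show ?thesis
    unfolding Fhat_def
  proof (rule infsum_meas[OF cX])
    fix i assume "i \<in> {i \<in> X. i \<le> x}"
    then show "(\<lambda>\<theta>. \<Sum>\<^sub>\<infinity>j\<in>{j \<in> X. j \<le> x'}. pmf (inv_dist X (K \<theta>)) i * pmf (K \<theta> i) j)
      \<in> borel_measurable ?M" using inner by simp
  qed (simp add: infsum_nonneg)
qed


end
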